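(* With notation as in the context, the subgroup $R[\{1,2,\dots,n+1\}]$ of $\mathcal{G}^{*J}_n$ equals the product of the iterated commutator subgroups $[[\dots[R_{i_1,j_1},R_{i_2,j_2}],\dots],R_{i_t,j_t}]$ over those sequences of pairs $1\leq i_s<j_s\leq n+1$ such that (1) $\{i_1,j_1,\dots,i_t,j_t\}=\{1,2,\dots,n+1\}$ and (2) $\{i_1,j_1,\dots,i_t,j_t\}\setminus\{i_p,j_p\}\neq\{1,2,\dots,n+1\}$ for every $1\leq p\leq t$.
   Context: $J$ is a set; $\mathcal{G}^{*J}_n$ is the free group on letters $x_{i,j}(\alpha)$, $1\leq i<j\leq n+1$, $\alpha\in J$ (the $n$-th group of a free product of copies of a simplicial free group $\mathcal{G}$ with $\mathcal{G}_n$ free on $x_{i,j}$). $R_{i,j}$ is the normal closure of $\{x_{i,j}(\alpha)\mid\alpha\in J\}$ in $\mathcal{G}^{*J}_n$. $R[\{1,\dots,n+1\}]$ is the product of all iterated commutator subgroups $[[\dots[R_{i_1,j_1},R_{i_2,j_2}],\dots],R_{i_t,j_t}]$, $t\geq1$, over all sequences of pairs with $\{1,\dots,n+1\}\subseteq\{i_1,j_1,\dots,i_t,j_t\}$ (for $t=1$ the subgroup is $R_{i_1,j_1}$). *)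

theory Defs
  imports "HOL-Algebra.Algebra"
begin

type_synonym 'g letter = "'g \<times> bool"   (* (generator, True) = x, (generator, False) = x^-1 *)

definition inv_letter :: "'g letter \<Rightarrow> 'g letter" where
  "inv_letter l = (fst l, \<not> snd l)"

fun reduced :: "'g letter list \<Rightarrow> bool" where
  "reduced [] = True"
| "reduced [x] = True"
| "reduced (x # y # ys) = (y \<noteq> inv_letter x \<and> reduced (y # ys))"

fun cancel_cons :: "'g letter \<Rightarrow> 'g letter list \<Rightarrow> 'g letter list" where
  "cancel_cons x [] = [x]"
| "cancel_cons x (y # ys) = (if y = inv_letter x then ys else x # y # ys)"

text \<open>The free group on the set of generators S: reduced words in S, multiplication is
  concatenation followed by free reduction.\<close>
definition free_group :: "'g set \<Rightarrow> 'g letter list monoid" where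
  "free_group S = \<lparr> carrier = {w. reduced w \<and> fst ` set w \<subseteq> S},
                    monoid.mult = (\<lambda>xs ys. foldr cancel_cons xs ys),
                    monoid.one = [] \<rparr>"

text \<open>Generators x_{i,j}(alpha), encoded as triples (i, j, alpha).\<close>
definition gens :: "nat \<Rightarrow> 'j set \<Rightarrow> (nat \<times> nat \<times> 'j) set" where
  "gens n J = {(i, j, a). 1 \<le> i \<and> i < j \<and> j \<le> n + 1 \<and> a \<in> J}"

definition Gn :: "nat \<Rightarrow> 'j set \<Rightarrow> (nat \<times> nat \<times> 'j) letter list monoid" where
  "Gn n J = free_group (gens n J)"

definition gen :: "nat \<Rightarrow> nat \<Rightarrow> 'j \<Rightarrow> (nat \<times> nat \<times> 'j) letter list" where
  "gen i j a = [((i, j, a), True)]"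

definition normal_closure :: "('a, 'b) monoid_scheme \<Rightarrow> 'a set \<Rightarrow> 'a set" where
  "normal_closure G H = generate G {g \<otimes>\<^bsub>G\<^esub> h \<otimes>\<^bsub>G\<^esub> inv\<^bsub>G\<^esub> g | g h. g \<in> carrier G \<and> h \<in> H}"

definition comm_subgroup :: "('a, 'b) monoid_scheme \<Rightarrow> 'a set \<Rightarrow> 'a set \<Rightarrow> 'a set" where
  "comm_subgroup G H K = generate G
     {h \<otimes>\<^bsub>G\<^esub> k \<otimes>\<^bsub>G\<^esub> inv\<^bsub>G\<^esub> h \<otimes>\<^bsub>G\<^esub> inv\<^bsub>G\<^esub> k | h k. h \<in> H \<and> k \<in> K}"

definition subgroup_product :: "('a, 'b) monoid_scheme \<Rightarrow> 'a set set \<Rightarrow> 'a set" where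
  "subgroup_product G \<H> = generate G (\<Union>\<H>)"

definition Rij :: "nat \<Rightarrow> 'j set \<Rightarrow> nat \<times> nat \<Rightarrow> (nat \<times> nat \<times> 'j) letter list set" where
  "Rij n J p = normal_closure (Gn n J) {gen (fst p) (snd p) a | a. a \<in> J}"

fun iter_comm :: "nat \<Rightarrow> 'j set \<Rightarrow> (nat \<times> nat) list \<Rightarrow> (nat \<times> nat \<times> 'j) letter list set" where
  "iter_comm n J [] = {[]}"
| "iter_comm n J (p # ps) = foldl (\<lambda>H q. comm_subgroup (Gn n J) H (Rij n J q)) (Rij n J p) ps"

definition valid_pair :: "nat \<Rightarrow> nat \<times> nat \<Rightarrow> bool" where
  "valid_pair n p \<longleftrightarrow> 1 \<le> fst p \<and> fst p < snd p \<and> snd p \<le> n + 1"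

definition indices :: "(nat \<times> nat) list \<Rightarrow> nat set" where
  "indices ps = (\<Union>p \<in> set ps. {fst p, snd p})"

definition R_full :: "nat \<Rightarrow> 'j set \<Rightarrow> (nat \<times> nat \<times> 'j) letter list set" where
  "R_full n J = subgroup_product (Gn n J)
     {iter_comm n J ps | ps. ps \<noteq> [] \<and> (\<forall>p \<in> set ps. valid_pair n p) \<and> {1..n+1} \<subseteq> indices ps}"

end

theory Submission imports Defs begin

lemma inv_inv_letter[simp]: "inv_letter (inv_letter x) = x"
  by (simp add: inv_letter_def)
lemma inv_letter_fst[simp]: "fst (inv_letter x) = fst x"
  by (simp add: inv_letter_def)

lemma reduced_tl: "reduced (y # ys) \<Longrightarrow> reduced ys"
  by (cases ys) auto

lemma reduced_cancel_cons: "reduced ys \<Longrightarrow> reduced (cancel_cons x ys)"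
  by (cases ys) (auto dest: reduced_tl)

lemma set_cancel_cons: "set (cancel_cons x ys) \<subseteq> insert x (set ys)"
  by (cases ys) auto

lemma reduced_foldr: "reduced ys \<Longrightarrow> reduced (foldr cancel_cons xs ys)"
  by (induction xs) (auto intro: reduced_cancel_cons)

lemma set_foldr: "set (foldr cancel_cons xs ys) \<subseteq> set xs \<union> set ys"
  apply (induction xs) apply simp
  using set_cancel_cons by fastforce

lemma cancel_inv: "reduced ys \<Longrightarrow> cancel_cons x (cancel_cons (inv_letter x) ys) = ys"
proof (cases ys)
  case Nil thus ?thesis by simp
next
  case (Cons y ys')
  assume r: "reduced ys"
  show ?thesis
  proof (cases "y = x")
    case True
    then show ?thesis using r Cons by (cases ys') auto
  next
    case False
    then show ?thesis using Cons by (auto simp: inv_letter_def)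
  qed
qed

lemma foldr_cancel_cons_left:
  assumes "reduced ys" "reduced zs"
  shows "foldr cancel_cons (cancel_cons x ys) zs = cancel_cons x (foldr cancel_cons ys zs)"
proof (cases ys)
  case Nil thus ?thesis by simp
next
  case (Cons y ys')
  show ?thesis
  proof (cases "y = inv_letter x")
    case True
    have "reduced (foldr cancel_cons ys' zs)" using assms reduced_foldr by blast
    then show ?thesis using Cons True cancel_inv[of "foldr cancel_cons ys' zs" x] by simp
  next
    case False
    then show ?thesis using Cons by simp
  qed
qed

lemma foldr_assoc:
  assumes "reduced ys" "reduced zs"
  shows "foldr cancel_cons (foldr cancel_cons xs ys) zs = foldr cancel_cons xs (foldr cancel_cons ys zs)"
  using assms
  by (induction xs) (simp_all add: foldr_cancel_cons_left reduced_foldr)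

lemma foldr_inv: "foldr cancel_cons (rev (map inv_letter w)) w = []"
proof (induction w)
  case Nil thus ?case by simp
next
  case (Cons x w)
  have "cancel_cons (inv_letter x) (x # w) = w" by (simp add: inv_letter_def)
  thus ?case using Cons by simp
qed

lemma reduced_inv: "reduced w \<Longrightarrow> reduced (rev (map inv_letter w))"
proof (induction w rule: reduced.induct)
  case (3 x y ys)
  have "reduced (rev (map inv_letter ys) @ [inv_letter y] @ [inv_letter x])"
  proof -
    have r: "reduced (rev (map inv_letter ys) @ [inv_letter y])" using 3 by simp
    have snoc: "\<And>zs a b. reduced (zs @ [a]) \<Longrightarrow> b \<noteq> inv_letter a \<Longrightarrow> reduced (zs @ [a, b])"
    proof -
      fix zs a b show "reduced (zs @ [a]) \<Longrightarrow> b \<noteq> inv_letter a \<Longrightarrow> reduced (zs @ [a, b])"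
        by (induction zs rule: reduced.induct) auto
    qed
    moreover have h: "inv_letter x \<noteq> inv_letter (inv_letter y)" using 3(2)
      by (auto simp: inv_letter_def)
    show ?thesis using snoc[OF r h] by simp
  qed
  thus ?case by simp
qed auto

lemma carrier_fg: "carrier (free_group S) = {w. reduced w \<and> fst ` set w \<subseteq> S}"
  and mult_fg: "x \<otimes>\<^bsub>free_group S\<^esub> y = foldr cancel_cons x y"
  and one_fg: "\<one>\<^bsub>free_group S\<^esub> = []"
  by (simp_all add: free_group_def)

lemma group_free_group: "group (free_group S)"
proof (rule groupI)
  fix x y assume x: "x \<in> carrier (free_group S)" and y: "y \<in> carrier (free_group S)"
  have "reduced (foldr cancel_cons x y)" using y unfolding carrier_fg by (blast intro: reduced_foldr)
  moreover have "fst ` set (foldr cancel_cons x y) \<subseteq> S"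
    using x y set_foldr[of x y] unfolding carrier_fg by blast
  ultimately show "x \<otimes>\<^bsub>free_group S\<^esub> y \<in> carrier (free_group S)"
    by (simp add: carrier_fg mult_fg)
next
  show "\<one>\<^bsub>free_group S\<^esub> \<in> carrier (free_group S)" by (simp add: carrier_fg one_fg)
next
  fix x y z assume "x \<in> carrier (free_group S)" "y \<in> carrier (free_group S)" "z \<in> carrier (free_group S)"
  thus "x \<otimes>\<^bsub>free_group S\<^esub> y \<otimes>\<^bsub>free_group S\<^esub> z = x \<otimes>\<^bsub>free_group S\<^esub> (y \<otimes>\<^bsub>free_group S\<^esub> z)"
    by (simp add: carrier_fg mult_fg foldr_assoc)
next
  fix x assume "x \<in> carrier (free_group S)"
  thus "\<one>\<^bsub>free_group S\<^esub> \<otimes>\<^bsub>free_group S\<^esub> x = x" by (simp add: mult_fg one_fg)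
next
  fix x assume x: "x \<in> carrier (free_group S)"
  have "rev (map inv_letter x) \<in> carrier (free_group S)"
    using x reduced_inv[of x] by (auto simp: carrier_fg)
  moreover have "rev (map inv_letter x) \<otimes>\<^bsub>free_group S\<^esub> x = \<one>\<^bsub>free_group S\<^esub>"
    by (simp add: mult_fg one_fg foldr_inv)
  ultimately show "\<exists>y\<in>carrier (free_group S). y \<otimes>\<^bsub>free_group S\<^esub> x = \<one>\<^bsub>free_group S\<^esub>"
    by blast
qed


context group begin

lemma inv_cancel_l [simp]: "x \<in> carrier G \<Longrightarrow> y \<in> carrier G \<Longrightarrow> inv x \<otimes> (x \<otimes> y) = y"
  by (simp add: m_assoc[symmetric])
lemma inv_cancel_r [simp]: "x \<in> carrier G \<Longrightarrow> y \<in> carrier G \<Longrightarrow> x \<otimes> (inv x \<otimes> y) = y"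
  by (simp add: m_assoc[symmetric])

lemma nc_normal:
  assumes A: "A \<subseteq> carrier G"
  shows "normal_closure G A \<lhd> G"
  unfolding normal_closure_def
proof (rule normal_generateI)
  show "{g \<otimes> h \<otimes> inv g |g h. g \<in> carrier G \<and> h \<in> A} \<subseteq> carrier G"
    using A by auto
next
  fix x g assume x: "x \<in> {g \<otimes> h \<otimes> inv g |g h. g \<in> carrier G \<and> h \<in> A}" and g: "g \<in> carrier G"
  then obtain a h where a: "a \<in> carrier G" and h: "h \<in> A" and xe: "x = a \<otimes> h \<otimes> inv a" by blast
  have hc: "h \<in> carrier G" using h A by auto
  have "g \<otimes> x \<otimes> inv g = (g \<otimes> a) \<otimes> h \<otimes> inv (g \<otimes> a)"
    using a g hc by (simp add: xe inv_mult_group m_assoc)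
  thus "g \<otimes> x \<otimes> inv g \<in> {g \<otimes> h \<otimes> inv g |g h. g \<in> carrier G \<and> h \<in> A}"
    using a g h by blast
qed

lemma comm_normal:
  assumes H: "H \<lhd> G" and K: "K \<lhd> G"
  shows "comm_subgroup G H K \<lhd> G"
  unfolding comm_subgroup_def
proof (rule normal_generateI)
  have Hc: "H \<subseteq> carrier G" and Kc: "K \<subseteq> carrier G"
    using H K normal_imp_subgroup subgroup.subset by blast+
  thus "{h \<otimes> k \<otimes> inv h \<otimes> inv k |h k. h \<in> H \<and> k \<in> K} \<subseteq> carrier G"
    by (auto intro!: m_closed inv_closed)
  fix x g assume x: "x \<in> {h \<otimes> k \<otimes> inv h \<otimes> inv k |h k. h \<in> H \<and> k \<in> K}" and g: "g \<in> carrier G"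
  then obtain h k where h: "h \<in> H" and k: "k \<in> K" and xe: "x = h \<otimes> k \<otimes> inv h \<otimes> inv k" by blast
  have hc: "h \<in> carrier G" and kc: "k \<in> carrier G" using h k Hc Kc by auto
  have "g \<otimes> x \<otimes> inv g = (g \<otimes> h \<otimes> inv g) \<otimes> (g \<otimes> k \<otimes> inv g) \<otimes> inv (g \<otimes> h \<otimes> inv g) \<otimes> inv (g \<otimes> k \<otimes> inv g)"
    using g hc kc by (simp add: xe inv_mult_group m_assoc)
  moreover have "g \<otimes> h \<otimes> inv g \<in> H" "g \<otimes> k \<otimes> inv g \<in> K"
    using H K h k g normal_inv_iff by blast+
  ultimately show "g \<otimes> x \<otimes> inv g \<in> {h \<otimes> k \<otimes> inv h \<otimes> inv k |h k. h \<in> H \<and> k \<in> K}"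
    by blast
qed

lemma comm_sub_left:
  assumes H: "H \<lhd> G" and K: "K \<lhd> G"
  shows "comm_subgroup G H K \<subseteq> H"
  unfolding comm_subgroup_def
proof (rule generate_subgroup_incl)
  show "subgroup H G" using H normal_imp_subgroup by blast
  have Hc: "H \<subseteq> carrier G" and Kc: "K \<subseteq> carrier G"
    using H K normal_imp_subgroup subgroup.subset by blast+
  show "{h \<otimes> k \<otimes> inv h \<otimes> inv k |h k. h \<in> H \<and> k \<in> K} \<subseteq> H"
  proof clarify
    fix h k assume h: "h \<in> H" and k: "k \<in> K"
    have hc: "h \<in> carrier G" and kc: "k \<in> carrier G" using h k Hc Kc by auto
    have "k \<otimes> inv h \<otimes> inv k \<in> H"
      using H h kc normal_inv_iff subgroup.m_inv_closed[OF normal_imp_subgroup[OF H] h] by blast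
    hence "h \<otimes> (k \<otimes> inv h \<otimes> inv k) \<in> H"
      using h subgroup.m_closed[OF normal_imp_subgroup[OF H]] by blast
    thus "h \<otimes> k \<otimes> inv h \<otimes> inv k \<in> H" using hc kc by (simp add: m_assoc)
  qed
qed

lemma comm_sub_right:
  assumes H: "H \<lhd> G" and K: "K \<lhd> G"
  shows "comm_subgroup G H K \<subseteq> K"
  unfolding comm_subgroup_def
proof (rule generate_subgroup_incl)
  show "subgroup K G" using K normal_imp_subgroup by blast
  have Hc: "H \<subseteq> carrier G" and Kc: "K \<subseteq> carrier G"
    using H K normal_imp_subgroup subgroup.subset by blast+
  show "{h \<otimes> k \<otimes> inv h \<otimes> inv k |h k. h \<in> H \<and> k \<in> K} \<subseteq> K"
  proof clarify
    fix h k assume h: "h \<in> H" and k: "k \<in> K"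
    have hc: "h \<in> carrier G" and kc: "k \<in> carrier G" using h k Hc Kc by auto
    have "h \<otimes> k \<otimes> inv h \<in> K"
      using K k hc normal_inv_iff by blast
    moreover have "inv k \<in> K" using subgroup.m_inv_closed[OF normal_imp_subgroup[OF K] k] .
    ultimately show "h \<otimes> k \<otimes> inv h \<otimes> inv k \<in> K"
      using subgroup.m_closed[OF normal_imp_subgroup[OF K]] by blast
  qed
qed

lemma comm_mono:
  assumes "H \<subseteq> H'"
  shows "comm_subgroup G H K \<subseteq> comm_subgroup G H' K"
  unfolding comm_subgroup_def
  by (rule mono_generate) (use assms in blast)

definition FF :: "('c \<Rightarrow> 'a set) \<Rightarrow> 'a set \<Rightarrow> 'c list \<Rightarrow> 'a set" where
  "FF R H qs = foldl (\<lambda>H q. comm_subgroup G H (R q)) H qs"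

lemma FF_Cons: "FF R H (q # qs) = FF R (comm_subgroup G H (R q)) qs"
  by (simp add: FF_def)
lemma FF_Nil: "FF R H [] = H"
  by (simp add: FF_def)

lemma FF_normal:
  "\<lbrakk>H \<lhd> G; \<forall>q\<in>set qs. R q \<lhd> G\<rbrakk> \<Longrightarrow> FF R H qs \<lhd> G"
  by (induction qs arbitrary: H) (simp_all add: FF_Nil FF_Cons comm_normal)

lemma FF_mono:
  "\<lbrakk>H \<subseteq> H'; \<forall>q\<in>set qs. R q \<lhd> G\<rbrakk> \<Longrightarrow> FF R H qs \<subseteq> FF R H' qs"
  by (induction qs arbitrary: H H') (simp_all add: FF_Nil FF_Cons comm_mono)

lemma FF_remove:
  "\<lbrakk>H \<lhd> G; \<forall>q\<in>set qs. R q \<lhd> G; k < length qs\<rbrakk>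
    \<Longrightarrow> FF R H qs \<subseteq> FF R H (take k qs @ drop (Suc k) qs)"
proof (induction qs arbitrary: H k)
  case Nil thus ?case by simp
next
  case (Cons q qs)
  show ?case
  proof (cases k)
    case 0
    have "comm_subgroup G H (R q) \<subseteq> H" using comm_sub_left Cons.prems by simp
    hence "FF R (comm_subgroup G H (R q)) qs \<subseteq> FF R H qs"
      by (rule FF_mono) (use Cons.prems in auto)
    thus ?thesis using 0 by (simp add: FF_Cons)
  next
    case (Suc k')
    have "comm_subgroup G H (R q) \<lhd> G" using comm_normal Cons.prems by simp
    thus ?thesis using Suc Cons.IH[of "comm_subgroup G H (R q)" k'] Cons.prems
      by (simp add: FF_Cons)
  qed
qed

lemma FF_remove_first:
  "\<lbrakk>R p \<lhd> G; R q \<lhd> G; \<forall>q\<in>set qs. R q \<lhd> G\<rbrakk>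
    \<Longrightarrow> FF R (comm_subgroup G (R p) (R q)) qs \<subseteq> FF R (R q) qs"
  using FF_mono comm_sub_right by blast

end


lemma group_Gn: "group (Gn n J)"
  unfolding Gn_def by (rule group_free_group)

lemma gen_carrier:
  assumes "valid_pair n p" "a \<in> J"
  shows "gen (fst p) (snd p) a \<in> carrier (Gn n J)"
  using assms by (auto simp: Gn_def carrier_fg gen_def gens_def valid_pair_def)

lemma Rij_normal:
  assumes "valid_pair n p"
  shows "Rij n J p \<lhd> Gn n J"
  unfolding Rij_def
  by (rule group.nc_normal[OF group_Gn]) (auto intro: gen_carrier[OF assms])

lemma iter_FF: "iter_comm n J (p # qs) = group.FF (Gn n J) (Rij n J) (Rij n J p) qs"
  by (simp add: group.FF_def[OF group_Gn])

lemma iter_normal: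
  assumes "ps \<noteq> []" "\<forall>p\<in>set ps. valid_pair n p"
  shows "iter_comm n J ps \<lhd> Gn n J"
proof -
  obtain p qs where ps: "ps = p # qs" using assms(1) by (cases ps) auto
  have "\<forall>q\<in>set ps. Rij n J q \<lhd> Gn n J"
  proof
    fix q assume "q \<in> set ps" thus "Rij n J q \<lhd> Gn n J" using assms(2) by (intro Rij_normal) simp
  qed
  thus ?thesis unfolding ps iter_FF
    by (intro group.FF_normal[OF group_Gn]) auto
qed

lemma iter_remove:
  assumes ne: "ps \<noteq> []" and v: "\<forall>p\<in>set ps. valid_pair n p" and k: "k < length ps"
    and ne2: "take k ps @ drop (Suc k) ps \<noteq> []"
  shows "iter_comm n J ps \<subseteq> iter_comm n J (take k ps @ drop (Suc k) ps)"
proof -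
  interpret G: group "Gn n J" by (rule group_Gn)
  obtain p qs where ps: "ps = p # qs" using assms(1) by (cases ps) auto
  have all: "\<forall>q\<in>set ps. Rij n J q \<lhd> Gn n J"
  proof
    fix q assume "q \<in> set ps" thus "Rij n J q \<lhd> Gn n J" using v by (intro Rij_normal) simp
  qed
  have nq: "\<forall>q\<in>set qs. Rij n J q \<lhd> Gn n J" using all ps by auto
  have np: "Rij n J p \<lhd> Gn n J" using all ps by auto
  show ?thesis
  proof (cases k)
    case 0
    then obtain q qs' where qs: "qs = q # qs'" using ne2 ps \<open>k = 0\<close> by (cases qs) simp_all
    have nq': "\<forall>q\<in>set qs'. Rij n J q \<lhd> Gn n J" "Rij n J q \<lhd> Gn n J" using nq qs by auto
    show ?thesis using 0 ps qs G.FF_remove_first[OF np nq'(2) nq'(1)]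
      by (simp add: G.FF_def)
  next
    case (Suc k')
    have "k' < length qs" using k ps Suc by simp
    hence "G.FF (Rij n J) (Rij n J p) qs \<subseteq> G.FF (Rij n J) (Rij n J p) (take k' qs @ drop (Suc k') qs)"
      using G.FF_remove[OF np nq] by blast
    thus ?thesis using Suc ps by (simp only: iter_FF take_Suc_Cons drop_Suc_Cons append_Cons)
  qed
qed

lemma indices_sub: "\<forall>p\<in>set ps. valid_pair n p \<Longrightarrow> indices ps \<subseteq> {1..n+1}"
  by (auto simp: indices_def valid_pair_def)

lemma indices_set: "set ps \<subseteq> set qs \<Longrightarrow> indices ps \<subseteq> indices qs"
  by (auto simp: indices_def)


lemma main_incl:
  fixes n :: nat and J :: "'j set"
  defines "Fam \<equiv> {iter_comm n J ps | ps. ps \<noteq> [] \<and> (\<forall>p \<in> set ps. valid_pair n p)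
        \<and> indices ps = {1..n+1}
        \<and> (\<forall>k < length ps. indices (take k ps @ drop (Suc k) ps) \<noteq> {1..n+1})}"
  shows "ps \<noteq> [] \<Longrightarrow> (\<forall>p \<in> set ps. valid_pair n p) \<Longrightarrow> {1..n+1} \<subseteq> indices ps
     \<Longrightarrow> iter_comm n J ps \<subseteq> \<Union>Fam \<or> iter_comm n J ps \<subseteq> generate (Gn n J) (\<Union>Fam)"
proof (induction "length ps" arbitrary: ps rule: less_induct)
  case less
  have eq: "indices ps = {1..n+1}" using indices_sub[OF less.prems(2)] less.prems(3) by (rule subset_antisym)
  show ?case
  proof (cases "\<forall>k < length ps. indices (take k ps @ drop (Suc k) ps) \<noteq> {1..n+1}")
    case True
    have "iter_comm n J ps \<in> Fam" unfolding Fam_def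
      apply (rule CollectI, rule exI[of _ ps])
      using less.prems eq True by simp
    hence "iter_comm n J ps \<subseteq> \<Union>Fam" by (rule Union_upper)
    thus ?thesis by (rule disjI1)
  next
    case False
    then obtain k where k: "k < length ps" and ik: "indices (take k ps @ drop (Suc k) ps) = {1..n+1}"
      by blast
    define qs where "qs = take k ps @ drop (Suc k) ps"
    have "n + 1 \<in> indices qs" using ik qs_def by simp
    hence qne: "qs \<noteq> []" unfolding indices_def by (cases qs) auto
    have "set qs \<subseteq> set ps" unfolding qs_def
      by (auto dest: in_set_takeD in_set_dropD)
    hence qv: "\<forall>p \<in> set qs. valid_pair n p" using less.prems(2) by (meson subsetD)
    have ql: "length qs < length ps" using k unfolding qs_def by simp
    have sub: "iter_comm n J ps \<subseteq> iter_comm n J qs"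
      unfolding qs_def by (rule iter_remove[OF less.prems(1,2) k qne[unfolded qs_def]])
    have "{1..n+1} \<subseteq> indices qs" using ik qs_def by simp
    from less.hyps[OF ql qne qv this]
    have "iter_comm n J qs \<subseteq> \<Union>Fam \<or> iter_comm n J qs \<subseteq> generate (Gn n J) (\<Union>Fam)" .
    moreover have "\<Union>Fam \<subseteq> generate (Gn n J) (\<Union>Fam)" by (rule subsetI, rule generate.incl)
    ultimately have "iter_comm n J qs \<subseteq> generate (Gn n J) (\<Union>Fam)" by (meson order_trans)
    hence "iter_comm n J ps \<subseteq> generate (Gn n J) (\<Union>Fam)" using sub by (meson order_trans)
    thus ?thesis by (rule disjI2)
  qed
qed

theorem lemma3p6:
  fixes n :: nat and J :: "'j set"
  shows "R_full n J = subgroup_product (Gn n J)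
     {iter_comm n J ps | ps. ps \<noteq> [] \<and> (\<forall>p \<in> set ps. valid_pair n p)
        \<and> indices ps = {1..n+1}
        \<and> (\<forall>k < length ps. indices (take k ps @ drop (Suc k) ps) \<noteq> {1..n+1})}"
  (is "_ = subgroup_product _ ?Fam")
proof -
  interpret G: group "Gn n J" by (rule group_Gn)
  let ?Full = "{iter_comm n J ps | ps. ps \<noteq> [] \<and> (\<forall>p \<in> set ps. valid_pair n p) \<and> {1..n+1} \<subseteq> indices ps}"
  have FamFull: "?Fam \<subseteq> ?Full"
  proof (rule subsetI)
    fix Y assume "Y \<in> ?Fam"
    then obtain ps where Y: "Y = iter_comm n J ps" and h: "ps \<noteq> []" "\<forall>p \<in> set ps. valid_pair n p"
        "indices ps = {1..n+1}" by blast
    show "Y \<in> ?Full"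
      by (rule CollectI, rule exI[of _ ps]) (simp add: Y h)
  qed
  have Fullc: "\<Union>?Full \<subseteq> carrier (Gn n J)"
  proof (rule subsetI)
    fix x assume "x \<in> \<Union>?Full"
    then obtain ps where x: "x \<in> iter_comm n J ps" and h: "ps \<noteq> []" "\<forall>p \<in> set ps. valid_pair n p"
      by blast
    have "iter_comm n J ps \<lhd> Gn n J" by (rule iter_normal[OF h])
    thus "x \<in> carrier (Gn n J)"
      using subgroup.subset[OF normal_imp_subgroup] x by blast
  qed
  have Famc: "\<Union>?Fam \<subseteq> carrier (Gn n J)" using Union_mono[OF FamFull] Fullc by (rule order_trans)
  have "generate (Gn n J) (\<Union>?Full) \<subseteq> generate (Gn n J) (\<Union>?Fam)"
  proof (rule G.generate_subgroup_incl)
    show "subgroup (generate (Gn n J) (\<Union>?Fam)) (Gn n J)" by (rule G.generate_is_subgroup[OF Famc])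
    show "\<Union>?Full \<subseteq> generate (Gn n J) (\<Union>?Fam)"
    proof (rule subsetI)
      fix x assume "x \<in> \<Union>?Full"
      then obtain ps where x: "x \<in> iter_comm n J ps" and h: "ps \<noteq> []" "\<forall>p \<in> set ps. valid_pair n p" "{1..n+1} \<subseteq> indices ps"
        by blast
      have inc: "\<Union>?Fam \<subseteq> generate (Gn n J) (\<Union>?Fam)" by (rule subsetI, rule generate.incl)
      from main_incl[where J=J, OF h] have "iter_comm n J ps \<subseteq> generate (Gn n J) (\<Union>?Fam)"
      proof (elim disjE)
        assume "iter_comm n J ps \<subseteq> \<Union>?Fam" thus ?thesis using inc by (rule order_trans)
      qed
      thus "x \<in> generate (Gn n J) (\<Union>?Fam)" using x by (rule subsetD)
    qed
  qed
  moreover have "generate (Gn n J) (\<Union>?Fam) \<subseteq> generate (Gn n J) (\<Union>?Full)"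
    by (rule G.mono_generate) (rule Union_mono[OF FamFull])
  ultimately show ?thesis unfolding R_full_def subgroup_product_def by (rule subset_antisym)
qed

end
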